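(* Let $n,m$ be positive integers and $t$ a nonnegative integer. Let $P$ be an induced path of a graph $G$ and let $x\in V(G)\setminus V(P)$ be such that $G\setminus V(P)\setminus x$ has $t$ components and $x$ has at least $(m+2)n^t$ neighbors in $P$. Then either $G$ has a $K_{2,n}$-minor, or $P$ has a subpath $P^*$ such that $x$ has exactly $m$ neighbors in $P^*$ and no vertex of $G\setminus V(P)$ other than $x$ has a neighbor in $P^*$.
   Context: Graphs are finite and simple; minors are simple minors. *)

theory Defs
  imports Main
begin

definition simple_graph :: "'a set \<Rightarrow> ('a \<Rightarrow> 'a \<Rightarrow> bool) \<Rightarrow> bool" where
  "simple_graph V E \<longleftrightarrow> finite V \<and> (\<forall>u v. E u v \<longrightarrow> u \<in> V \<and> v \<in> V)
     \<and> (\<forall>u v. E u v \<longrightarrow> E v u) \<and> (\<forall>u. \<not> E u u)"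

definition connected_in :: "('a \<Rightarrow> 'a \<Rightarrow> bool) \<Rightarrow> 'a set \<Rightarrow> bool" where
  "connected_in E S \<longleftrightarrow> S \<noteq> {} \<and>
     (\<forall>u\<in>S. \<forall>v\<in>S. (\<lambda>a b. E a b \<and> a \<in> S \<and> b \<in> S)\<^sup>*\<^sup>* u v)"

definition components :: "('a \<Rightarrow> 'a \<Rightarrow> bool) \<Rightarrow> 'a set \<Rightarrow> 'a set set" where
  "components E W = {C. C \<subseteq> W \<and> connected_in E C \<and>
     (\<forall>D. C \<subseteq> D \<and> D \<subseteq> W \<and> connected_in E D \<longrightarrow> D = C)}"

definition induced_path :: "'a set \<Rightarrow> ('a \<Rightarrow> 'a \<Rightarrow> bool) \<Rightarrow> 'a list \<Rightarrow> bool" where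
  "induced_path V E P \<longleftrightarrow> P \<noteq> [] \<and> distinct P \<and> set P \<subseteq> V \<and>
     (\<forall>i j. i < length P \<and> j < length P \<longrightarrow>
        (E (P ! i) (P ! j) \<longleftrightarrow> (i = j + 1 \<or> j = i + 1)))"

definition subpath :: "'a list \<Rightarrow> 'a list \<Rightarrow> bool" where
  "subpath Q P \<longleftrightarrow> Q \<noteq> [] \<and> (\<exists>ys zs. P = ys @ Q @ zs)"

definition minor_model :: "'a set \<Rightarrow> ('a \<Rightarrow> 'a \<Rightarrow> bool) \<Rightarrow> 'b set \<Rightarrow> ('b \<Rightarrow> 'b \<Rightarrow> bool)
     \<Rightarrow> ('b \<Rightarrow> 'a set) \<Rightarrow> bool" where
  "minor_model V E VH EH \<beta> \<longleftrightarrow>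
     (\<forall>h\<in>VH. \<beta> h \<subseteq> V \<and> connected_in E (\<beta> h)) \<and>
     (\<forall>h\<in>VH. \<forall>h'\<in>VH. h \<noteq> h' \<longrightarrow> \<beta> h \<inter> \<beta> h' = {}) \<and>
     (\<forall>h\<in>VH. \<forall>h'\<in>VH. EH h h' \<longrightarrow> (\<exists>u\<in>\<beta> h. \<exists>v\<in>\<beta> h'. E u v))"

definition has_minor :: "'a set \<Rightarrow> ('a \<Rightarrow> 'a \<Rightarrow> bool) \<Rightarrow> 'b set \<Rightarrow> ('b \<Rightarrow> 'b \<Rightarrow> bool) \<Rightarrow> bool" where
  "has_minor V E VH EH \<longleftrightarrow> (\<exists>\<beta>. minor_model V E VH EH \<beta>)"

definition K2n_V :: "nat \<Rightarrow> (nat + nat) set" where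
  "K2n_V n = {Inl 0, Inl 1} \<union> Inr ` {..<n}"

definition K2n_E :: "nat + nat \<Rightarrow> nat + nat \<Rightarrow> bool" where
  "K2n_E a b \<longleftrightarrow> isl a \<noteq> isl b"

end

theory Submission
  imports Defs
begin

definition cnt :: "('a \<Rightarrow> 'a \<Rightarrow> bool) \<Rightarrow> 'a \<Rightarrow> 'a list \<Rightarrow> nat" where
  "cnt E x S = length (filter (E x) S)"

lemma cnt_append: "cnt E x (A @ B) = cnt E x A + cnt E x B"
  by (simp add: cnt_def)

lemma card_cnt: "distinct A \<Longrightarrow> card {v \<in> set A. E x v} = cnt E x A"
  by (metis cnt_def set_filter distinct_card distinct_filter)

lemma prefix_split: "q \<le> cnt E x L \<Longrightarrow> \<exists>A B. L = A @ B \<and> cnt E x A = q"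
proof (induction L arbitrary: q)
  case Nil thus ?case by (simp add: cnt_def)
next
  case (Cons a L)
  show ?case
  proof (cases "q = 0")
    case True then show ?thesis
      by (intro exI[of _ "[]"] exI[of _ "a # L"]) (simp add: cnt_def)
  next
    case False
    show ?thesis
    proof (cases "E x a")
      case True
      then have "q - 1 \<le> cnt E x L" using Cons.prems by (simp add: cnt_def)
      then obtain A B where "L = A @ B" "cnt E x A = q - 1" using Cons.IH by blast
      then show ?thesis using True False
        by (intro exI[of _ "a # A"] exI[of _ B]) (simp add: cnt_def)
    next
      case F: False
      then have "q \<le> cnt E x L" using Cons.prems by (simp add: cnt_def)
      then obtain A B where "L = A @ B" "cnt E x A = q" using Cons.IH by blast
      then show ?thesis using F
        by (intro exI[of _ "a # A"] exI[of _ B]) (simp add: cnt_def)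
    qed
  qed
qed

lemma split_n: "Suc k * q \<le> cnt E x L \<Longrightarrow>
  \<exists>Ss. length Ss = Suc k \<and> concat Ss = L \<and> (\<forall>s\<in>set Ss. q \<le> cnt E x s)"
proof (induction k arbitrary: L)
  case 0 then show ?case by (intro exI[of _ "[L]"]) simp
next
  case (Suc k)
  have "q \<le> Suc (Suc k) * q" by simp
  then have le: "q \<le> cnt E x L" using Suc.prems by (rule le_trans)
  obtain A B where AB: "L = A @ B" "cnt E x A = q" using prefix_split[OF le] by blast
  have "cnt E x L = q + cnt E x B" using AB by (simp add: cnt_append)
  with Suc.prems have "Suc k * q \<le> cnt E x B" by simp
  then obtain Ss where Ss: "length Ss = Suc k \<and> concat Ss = B \<and> (\<forall>s\<in>set Ss. q \<le> cnt E x s)"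
    using Suc.IH by blast
  show ?case
  proof (rule exI[of _ "A # Ss"], intro conjI)
    show "length (A # Ss) = Suc (Suc k)" using Ss by simp
    show "concat (A # Ss) = L" using Ss AB by simp
    show "\<forall>s\<in>set (A # Ss). q \<le> cnt E x s" using Ss AB by simp
  qed
qed

lemma concat_nth_split: assumes "i < length Ss" shows
  "concat Ss = concat (take i Ss) @ Ss ! i @ concat (drop (Suc i) Ss)"
proof -
  have "concat Ss = concat (take i Ss @ Ss!i # drop (Suc i) Ss)"
    using id_take_nth_drop[OF assms] by (rule arg_cong[where f=concat])
  also have "\<dots> = concat (take i Ss) @ Ss ! i @ concat (drop (Suc i) Ss)" by simp
  finally show ?thesis .
qed

lemma concat_disj:
  assumes "distinct (concat Ss)" "i < j" "j < length Ss"
  shows "set (Ss ! i) \<inter> set (Ss ! j) = {}"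
proof -
  have eq: "concat Ss = concat (take j Ss) @ Ss ! j @ concat (drop (Suc j) Ss)"
    using concat_nth_split[OF assms(3)] .
  have d: "distinct (concat (take j Ss) @ Ss ! j @ concat (drop (Suc j) Ss))"
    using assms(1) unfolding eq .
  have "take j Ss ! i = Ss ! i" using assms(2) by simp
  moreover have "i < length (take j Ss)" using assms(2,3) by simp
  ultimately have "Ss ! i \<in> set (take j Ss)" by (metis nth_mem)
  then have "set (Ss ! i) \<subseteq> set (concat (take j Ss))" by auto
  then show ?thesis using d by auto
qed

lemma chain_conn:
  assumes sym: "\<forall>u v. E u v \<longrightarrow> E v u"
    and ch: "\<forall>i. Suc i < length S \<longrightarrow> E (S ! i) (S ! Suc i)" and ne: "S \<noteq> []"
  shows "connected_in E (set S)"
proof -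
  let ?R = "\<lambda>a b. E a b \<and> a \<in> set S \<and> b \<in> set S"
  have key: "i \<le> j \<Longrightarrow> j < length S \<Longrightarrow> ?R\<^sup>*\<^sup>* (S!i) (S!j) \<and> ?R\<^sup>*\<^sup>* (S!j) (S!i)" for i j
  proof (induction j)
    case 0 then show ?case by simp
  next
    case (Suc j)
    show ?case
    proof (cases "i = Suc j")
      case True then show ?thesis by simp
    next
      case False
      then have "i \<le> j" using Suc.prems by simp
      with Suc.IH Suc.prems have ih: "?R\<^sup>*\<^sup>* (S!i) (S!j) \<and> ?R\<^sup>*\<^sup>* (S!j) (S!i)" by simp
      have "E (S!j) (S!Suc j)" using ch Suc.prems by blast
      then have e1: "?R (S!j) (S!Suc j)" using Suc.prems by simp
      have e2: "?R (S!Suc j) (S!j)" using e1 sym by blast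
      have a: "?R\<^sup>*\<^sup>* (S!i) (S!Suc j)"
        by (rule rtranclp.rtrancl_into_rtrancl[OF conjunct1[OF ih] e1])
      have b: "?R\<^sup>*\<^sup>* (S!Suc j) (S!i)"
        by (rule converse_rtranclp_into_rtranclp[OF e2 conjunct2[OF ih]])
      show ?thesis using a b by simp
    qed
  qed
  show ?thesis unfolding connected_in_def
  proof (intro conjI ballI)
    show "set S \<noteq> {}" using ne by simp
    fix u v assume "u \<in> set S" "v \<in> set S"
    then obtain i j where "i < length S" "j < length S" "u = S!i" "v = S!j"
      by (metis in_set_conv_nth)
    then show "?R\<^sup>*\<^sup>* u v" using key[of i j] key[of j i] by (cases "i \<le> j") auto
  qed
qed

lemma sym_rtranclp: "(\<forall>a b. r a b \<longrightarrow> r b a) \<Longrightarrow> r\<^sup>*\<^sup>* a b \<Longrightarrow> r\<^sup>*\<^sup>* b a"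
proof -
  assume s: "\<forall>a b. r a b \<longrightarrow> r b a"
  assume "r\<^sup>*\<^sup>* a b" then show "r\<^sup>*\<^sup>* b a"
  proof (induction rule: rtranclp_induct)
    case base then show ?case by simp
  next
    case (step b c) then show ?case using s by (meson converse_rtranclp_into_rtranclp)
  qed
qed

lemma comp_cover:
  assumes sym: "\<forall>a b. E a b \<longrightarrow> E b a" and u: "u \<in> W"
  shows "\<exists>C\<in>components E W. u \<in> C"
proof -
  let ?RW = "\<lambda>a b. E a b \<and> a \<in> W \<and> b \<in> W"
  define R where "R = {v. ?RW\<^sup>*\<^sup>* u v}"
  have RW: "R \<subseteq> W"
  proof
    fix v assume "v \<in> R"
    then have "?RW\<^sup>*\<^sup>* u v" by (simp add: R_def)
    then show "v \<in> W" using u by (induction rule: rtranclp_induct) auto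
  qed
  have uR: "u \<in> R" by (simp add: R_def)
  let ?RR = "\<lambda>a b. E a b \<and> a \<in> R \<and> b \<in> R"
  have toR: "?RR\<^sup>*\<^sup>* u v" if "?RW\<^sup>*\<^sup>* u v" for v
    using that
  proof (induction rule: rtranclp_induct)
    case base then show ?case by simp
  next
    case (step b c)
    then have "b \<in> R" "c \<in> R" unfolding R_def
      by (auto intro: rtranclp.rtrancl_into_rtrancl)
    then have "?RR b c" using step by simp
    then show ?case by (rule rtranclp.rtrancl_into_rtrancl[OF step.IH])
  qed
  have symRR: "\<forall>a b. ?RR a b \<longrightarrow> ?RR b a" using sym by blast
  have conn: "connected_in E R"
    unfolding connected_in_def
  proof (intro conjI ballI)
    show "R \<noteq> {}" using uR by blast
    fix v w assume "v \<in> R" "w \<in> R"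
    then have "?RR\<^sup>*\<^sup>* u v" "?RR\<^sup>*\<^sup>* u w" using toR R_def by auto
    then show "?RR\<^sup>*\<^sup>* v w" using sym_rtranclp[OF symRR] by (meson rtranclp_trans)
  qed
  have max: "D = R" if "R \<subseteq> D" "D \<subseteq> W" "connected_in E D" for D
  proof
    show "D \<subseteq> R"
    proof
      fix d assume "d \<in> D"
      with that uR have "(\<lambda>a b. E a b \<and> a \<in> D \<and> b \<in> D)\<^sup>*\<^sup>* u d"
        unfolding connected_in_def by blast
      then have "?RW\<^sup>*\<^sup>* u d"
      proof (induction rule: rtranclp_induct)
        case base then show ?case by simp
      next
        case (step b c)
        then have "?RW b c" using that(2) by auto
        then show ?case by (rule rtranclp.rtrancl_into_rtrancl[OF step.IH])
      qed
      then show "d \<in> R" by (simp add: R_def)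
    qed
  qed (rule that(1))
  have Rc: "R \<in> components E W" unfolding components_def
  proof (rule CollectI, intro conjI allI impI)
    show "R \<subseteq> W" by (rule RW)
    show "connected_in E R" by (rule conn)
    fix D assume a: "R \<subseteq> D \<and> D \<subseteq> W \<and> connected_in E D"
    show "D = R" by (rule max[OF conjunct1[OF a] conjunct1[OF conjunct2[OF a]] conjunct2[OF conjunct2[OF a]]])
  qed
  show ?thesis
  proof (rule bexI[where x=R])
    show "u \<in> R" by (rule uR)
    show "R \<in> components E W" by (rule Rc)
  qed
qed

lemma k2n_minor:
  assumes sym: "\<forall>a b. E a b \<longrightarrow> E b a" and xV: "x \<in> V" and CV: "C \<subseteq> V"
    and Cc: "connected_in E C" and xC: "x \<notin> C"
    and B: "\<forall>i<n. B i \<subseteq> V \<and> connected_in E (B i) \<and> x \<notin> B i \<and> C \<inter> B i = {}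
        \<and> (\<exists>v\<in>B i. E x v) \<and> (\<exists>u\<in>C. \<exists>v\<in>B i. E u v)"
    and D: "\<forall>i<n. \<forall>j<n. i \<noteq> j \<longrightarrow> B i \<inter> B j = {}"
  shows "has_minor V E (K2n_V n) K2n_E"
proof -
  define \<beta> :: "nat + nat \<Rightarrow> 'a set" where "\<beta> = (\<lambda>h. case h of Inl a \<Rightarrow> (if a = 0 then {x} else C) | Inr i \<Rightarrow> B i)"
  have cx: "connected_in E {x}" by (simp add: connected_in_def)
  have hV: "h = Inl 0 \<or> h = Inl 1 \<or> (\<exists>i<n. h = Inr i)" if "h \<in> K2n_V n" for h
    using that by (auto simp: K2n_V_def)
  have bz: "\<beta> (Inl 0) = {x}" and bo: "\<beta> (Inl 1) = C" and bo': "\<beta> (Inl (Suc 0)) = C" and bi: "\<And>i. \<beta> (Inr i) = B i"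
    by (simp_all add: \<beta>_def)
  have Bv: "\<And>i. i < n \<Longrightarrow> B i \<subseteq> V" and Bc: "\<And>i. i < n \<Longrightarrow> connected_in E (B i)"
    and Bx: "\<And>i. i < n \<Longrightarrow> x \<notin> B i" and BC: "\<And>i. i < n \<Longrightarrow> C \<inter> B i = {}"
    and Bxe: "\<And>i. i < n \<Longrightarrow> \<exists>v\<in>B i. E x v" and BCe: "\<And>i. i < n \<Longrightarrow> \<exists>u\<in>C. \<exists>v\<in>B i. E u v"
    using B by auto
  have Bxe': "\<And>i. i < n \<Longrightarrow> \<exists>u\<in>B i. E u x" using Bxe sym by blast
  have BCe': "\<And>i. i < n \<Longrightarrow> \<exists>u\<in>B i. \<exists>v\<in>C. E u v" using BCe sym by blast
  have BC': "\<And>i. i < n \<Longrightarrow> B i \<inter> C = {}" using BC by blast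
  have D': "\<And>i j. i < n \<Longrightarrow> j < n \<Longrightarrow> i \<noteq> j \<Longrightarrow> B i \<inter> B j = {}" using D by blast
  have c1: "\<forall>h\<in>K2n_V n. \<beta> h \<subseteq> V \<and> connected_in E (\<beta> h)"
  proof
    fix h assume h: "h \<in> K2n_V n"
    show "\<beta> h \<subseteq> V \<and> connected_in E (\<beta> h)"
      using hV[OF h]
    proof (elim disjE exE conjE)
      assume "h = Inl 0" then show ?thesis using xV cx bz by simp
    next
      assume "h = Inl 1" then show ?thesis using CV Cc bo by simp
    next
      fix i assume "i < n" "h = Inr i" then show ?thesis using Bv Bc bi by simp
    qed
  qed
  have c2: "\<forall>h\<in>K2n_V n. \<forall>h'\<in>K2n_V n. h \<noteq> h' \<longrightarrow> \<beta> h \<inter> \<beta> h' = {}"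
  proof (intro ballI impI)
    fix h h' assume h: "h \<in> K2n_V n" and h': "h' \<in> K2n_V n" and ne: "h \<noteq> h'"
    show "\<beta> h \<inter> \<beta> h' = {}"
      using hV[OF h] hV[OF h'] ne
      apply (elim disjE exE conjE)
      by (simp_all add: bz bo bo' bi xC Bx BC BC' D')
  qed
  have c3: "\<forall>h\<in>K2n_V n. \<forall>h'\<in>K2n_V n. K2n_E h h' \<longrightarrow> (\<exists>u\<in>\<beta> h. \<exists>v\<in>\<beta> h'. E u v)"
  proof (intro ballI impI)
    fix h h' assume h: "h \<in> K2n_V n" and h': "h' \<in> K2n_V n" and e: "K2n_E h h'"
    show "\<exists>u\<in>\<beta> h. \<exists>v\<in>\<beta> h'. E u v"
      using hV[OF h] hV[OF h'] e
      apply (elim disjE exE conjE)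
      by (simp_all add: bz bo bo' bi K2n_E_def Bxe BCe Bxe' BCe')
  qed
  show ?thesis unfolding has_minor_def minor_model_def
    by (rule exI[of _ \<beta>]) (intro conjI c1 c2 c3)
qed

lemma seg_chain:
  assumes ip: "induced_path V E P" and P: "P = pre @ T @ post"
  shows "\<forall>k. Suc k < length T \<longrightarrow> E (T ! k) (T ! Suc k)"
proof (intro allI impI)
  fix k assume k: "Suc k < length T"
  have "P ! (length pre + k) = T ! k" "P ! (length pre + Suc k) = T ! Suc k"
    using P k by (simp_all add: nth_append)
  moreover have "length pre + Suc k < length P" using P k by simp
  ultimately show "E (T ! k) (T ! Suc k)" using ip unfolding induced_path_def
    by (metis add_Suc_right add_lessD1 lessI less_trans_Suc Suc_eq_plus1)
qed


lemma cnt_pos: "0 < cnt E x s \<Longrightarrow> \<exists>v\<in>set s. E x v"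
  unfolding cnt_def by (induction s) (auto split: if_splits)

lemma key:
  assumes sym: "\<forall>a b. E a b \<longrightarrow> E b a" and ip: "induced_path V E P"
    and distP: "distinct P" and PV: "set P \<subseteq> V"
    and xV: "x \<in> V" and xP: "x \<notin> set P" and n: "0 < n" and m: "0 < m"
  shows "(\<forall>C\<in>set Cs. C \<subseteq> V \<and> connected_in E C \<and> x \<notin> C \<and> C \<inter> set P = {}) \<Longrightarrow>
    P = ys @ S @ zs \<Longrightarrow> m * n ^ length Cs \<le> cnt E x S \<Longrightarrow>
    has_minor V E (K2n_V n) K2n_E \<or>
    (\<exists>Q. subpath Q P \<and> set Q \<subseteq> set S \<and> card {v \<in> set Q. E x v} = m \<and>
       (\<forall>u \<in> \<Union>(set Cs). \<forall>v \<in> set Q. \<not> E u v))"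
proof (induction Cs arbitrary: ys S zs)
  case Nil
  then have "m \<le> cnt E x S" by simp
  then obtain A B where AB: "S = A @ B" "cnt E x A = m" using prefix_split[of m E x S] by blast
  have Ane: "A \<noteq> []" using AB(2) m by (auto simp: cnt_def)
  have PA: "P = ys @ A @ (B @ zs)" using Nil.prems(2) AB by simp
  have sp: "subpath A P" unfolding subpath_def
    by (rule conjI[OF Ane], rule exI[of _ ys], rule exI[of _ "B @ zs"], rule PA)
  have "distinct A" using distP PA by simp
  then have cA: "card {v \<in> set A. E x v} = m" using AB(2) card_cnt[where A=A and E=E and x=x] by simp
  have sA: "set A \<subseteq> set S" using AB(1) by simp
  have nb: "\<forall>u \<in> \<Union>(set []). \<forall>v \<in> set A. \<not> E u v" by simp
  show ?case using sp sA cA nb by blast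
next
  case (Cons C Cs)
  obtain k where nk: "n = Suc k" using n by (cases n) auto
  define q where "q = m * n ^ length Cs"
  have "m * n ^ length (C # Cs) = Suc k * q" using nk by (simp add: q_def mult.left_commute)
  then have "Suc k * q \<le> cnt E x S" using Cons.prems(3) by simp
  then obtain Ss where Ss: "length Ss = Suc k" "concat Ss = S" "\<forall>s\<in>set Ss. q \<le> cnt E x s"
    using split_n[of k q E x S] by blast
  have qpos: "0 < q" using m n by (simp add: q_def)
  have distS: "distinct (concat Ss)" using distP Cons.prems(2) Ss by simp
  have li: "i < length Ss" if "i < n" for i using that nk Ss(1) by simp
  have seg: "P = (ys @ concat (take i Ss)) @ Ss!i @ (concat (drop (Suc i) Ss) @ zs)" if "i < n" for i
  proof -
    have e: "S = concat (take i Ss) @ Ss!i @ concat (drop (Suc i) Ss)"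
      using concat_nth_split[OF li[OF that]] unfolding Ss(2) .
    show ?thesis using Cons.prems(2) unfolding e by simp
  qed
  have mem: "Ss!i \<in> set Ss" if "i < n" for i using li[OF that] by (rule nth_mem)
  have cnti: "q \<le> cnt E x (Ss!i)" if "i < n" for i
    using Ss(3) mem[OF that] by blast
  have subS: "set (Ss!i) \<subseteq> set S" if "i < n" for i
  proof -
    have "set (Ss!i) \<subseteq> set (concat Ss)" using mem[OF that] by auto
    then show ?thesis unfolding Ss(2) .
  qed
  have hC: "C \<subseteq> V \<and> connected_in E C \<and> x \<notin> C \<and> C \<inter> set P = {}" using Cons.prems(1) by simp
  have SP: "set S \<subseteq> set P" using Cons.prems(2) by auto
  show ?case
  proof (cases "\<forall>i<n. \<exists>u\<in>C. \<exists>v\<in>set (Ss!i). E u v")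
    case True
    have Bc: "\<forall>i<n. set (Ss!i) \<subseteq> V \<and> connected_in E (set (Ss!i)) \<and> x \<notin> set (Ss!i) \<and>
        C \<inter> set (Ss!i) = {} \<and> (\<exists>v\<in>set (Ss!i). E x v) \<and> (\<exists>u\<in>C. \<exists>v\<in>set (Ss!i). E u v)"
    proof (intro allI impI conjI)
      fix i assume i: "i < n"
      have "0 < cnt E x (Ss!i)" using cnti[OF i] qpos by linarith
      then have ex: "\<exists>v\<in>set (Ss!i). E x v" by (rule cnt_pos)
      show "set (Ss!i) \<subseteq> V" using subS[OF i] SP PV by blast
      show "connected_in E (set (Ss!i))"
      proof (rule chain_conn[OF _ seg_chain[OF ip seg[OF i]]])
        show "\<forall>u v. E u v \<longrightarrow> E v u" by (rule sym)
        show "Ss ! i \<noteq> []" using ex by auto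
      qed
      show "x \<notin> set (Ss!i)" using subS[OF i] SP xP by blast
      show "C \<inter> set (Ss!i) = {}" using subS[OF i] SP hC by blast
      show "\<exists>v\<in>set (Ss!i). E x v" by (rule ex)
      show "\<exists>u\<in>C. \<exists>v\<in>set (Ss!i). E u v" using True[rule_format, OF i] .
    qed
    have D: "\<forall>i<n. \<forall>j<n. i \<noteq> j \<longrightarrow> set (Ss!i) \<inter> set (Ss!j) = {}"
    proof (intro allI impI)
      fix i j assume ij: "i < n" "j < n" "i \<noteq> j"
      show "set (Ss!i) \<inter> set (Ss!j) = {}"
      proof (cases "i < j")
        case True show ?thesis using concat_disj[OF distS True li[OF ij(2)]] .
      next
        case False then have "j < i" using ij(3) by simp
        have "set (Ss!j) \<inter> set (Ss!i) = {}" using concat_disj[OF distS \<open>j < i\<close> li[OF ij(1)]] .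
        then show ?thesis by blast
      qed
    qed
    have hC1: "C \<subseteq> V" and hC2: "connected_in E C" and hC3: "x \<notin> C" using hC by auto
    have "has_minor V E (K2n_V n) K2n_E"
      by (rule k2n_minor[OF sym xV hC1 hC2 hC3 Bc D])
    then show ?thesis by blast
  next
    case False
    then obtain i where i: "i < n" "\<not> (\<exists>u\<in>C. \<exists>v\<in>set (Ss!i). E u v)" by blast
    have pr: "\<forall>C\<in>set Cs. C \<subseteq> V \<and> connected_in E C \<and> x \<notin> C \<and> C \<inter> set P = {}"
      using Cons.prems(1) by simp
    have ci: "m * n ^ length Cs \<le> cnt E x (Ss!i)" using cnti[OF i(1)] by (simp add: q_def)
    from Cons.IH[OF pr seg[OF i(1)] ci] show ?thesis
    proof
      assume "has_minor V E (K2n_V n) K2n_E" then show ?thesis by blast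
    next
      assume "\<exists>Q. subpath Q P \<and> set Q \<subseteq> set (Ss!i) \<and> card {v \<in> set Q. E x v} = m \<and>
       (\<forall>u \<in> \<Union>(set Cs). \<forall>v \<in> set Q. \<not> E u v)"
      then obtain Q where Q: "subpath Q P" "set Q \<subseteq> set (Ss!i)" "card {v \<in> set Q. E x v} = m"
        "\<forall>u \<in> \<Union>(set Cs). \<forall>v \<in> set Q. \<not> E u v" by blast
      have nb: "\<forall>u \<in> \<Union>(set (C # Cs)). \<forall>v \<in> set Q. \<not> E u v"
      proof (intro ballI)
        fix u v assume u: "u \<in> \<Union>(set (C # Cs))" and v: "v \<in> set Q"
        show "\<not> E u v"
        proof (cases "u \<in> C")
          case True then show ?thesis using i(2) Q(2) v by blast
        next
          case False then have "u \<in> \<Union>(set Cs)" using u by simp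
          then show ?thesis using Q(4) v by blast
        qed
      qed
      have "set Q \<subseteq> set S" using Q(2) subS[OF i(1)] by (rule subset_trans)
      then show ?thesis using Q(1,3) nb by blast
    qed
  qed
qed

theorem mainTheorem10:
  fixes V :: "'a set" and E :: "'a \<Rightarrow> 'a \<Rightarrow> bool" and P :: "'a list" and x :: 'a
    and n m t :: nat
  assumes "simple_graph V E"
    and "0 < n" and "0 < m"
    and "induced_path V E P"
    and "x \<in> V" and "x \<notin> set P"
    and "card (components E (V - set P - {x})) = t"
    and "card {v \<in> set P. E x v} \<ge> (m + 2) * n ^ t"
  shows "has_minor V E (K2n_V n) K2n_E \<or>
    (\<exists>Q. subpath Q P \<and> card {v \<in> set Q. E x v} = m \<and>
         (\<forall>u \<in> V - set P - {x}. \<forall>v \<in> set Q. \<not> E u v))"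
proof -
  have sym: "\<forall>a b. E a b \<longrightarrow> E b a" using assms(1) by (simp add: simple_graph_def)
  have finV: "finite V" using assms(1) by (simp add: simple_graph_def)
  have distP: "distinct P" and PV: "set P \<subseteq> V" using assms(4) by (simp_all add: induced_path_def)
  define W where "W = V - set P - {x}"
  have "components E W \<subseteq> Pow W"
  proof
    fix C assume "C \<in> components E W"
    then have "C \<subseteq> W" unfolding components_def by simp
    then show "C \<in> Pow W" by simp
  qed
  moreover have "finite (Pow W)" using finV by (simp add: W_def)
  ultimately have fin: "finite (components E W)" by (rule finite_subset)
  obtain Cs where Cs: "set Cs = components E W" "distinct Cs"
    using finite_distinct_list[OF fin] by blast
  have "length Cs = card (set Cs)" using distinct_card[OF Cs(2)] by simp
  then have len: "length Cs = t" using Cs(1) assms(7) unfolding W_def by simp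
  have Cp: "\<forall>C\<in>set Cs. C \<subseteq> V \<and> connected_in E C \<and> x \<notin> C \<and> C \<inter> set P = {}"
  proof
    fix C assume "C \<in> set Cs"
    then have "C \<in> components E W" using Cs(1) by simp
    then have "C \<subseteq> W" "connected_in E C" unfolding components_def by simp_all
    then show "C \<subseteq> V \<and> connected_in E C \<and> x \<notin> C \<and> C \<inter> set P = {}" unfolding W_def by blast
  qed
  have "card {v \<in> set P. E x v} = cnt E x P" by (rule card_cnt[OF distP])
  moreover have "m * n ^ t \<le> (m + 2) * n ^ t" by simp
  ultimately have "m * n ^ t \<le> cnt E x P" using assms(8) by linarith
  then have c: "m * n ^ length Cs \<le> cnt E x P" using len by simp
  have "has_minor V E (K2n_V n) K2n_E \<or>
    (\<exists>Q. subpath Q P \<and> set Q \<subseteq> set P \<and> card {v \<in> set Q. E x v} = m \<and>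
       (\<forall>u \<in> \<Union>(set Cs). \<forall>v \<in> set Q. \<not> E u v))"
    by (rule key[OF sym assms(4) distP PV assms(5) assms(6) assms(2) assms(3) Cp, of "[]" P "[]"]) (simp_all add: c)
  then show ?thesis
  proof (elim disjE exE conjE)
    assume "has_minor V E (K2n_V n) K2n_E" then show ?thesis by blast
  next
    fix Q assume Q: "subpath Q P" "card {v \<in> set Q. E x v} = m"
      "\<forall>u \<in> \<Union>(set Cs). \<forall>v \<in> set Q. \<not> E u v"
    have "\<forall>u \<in> V - set P - {x}. \<forall>v \<in> set Q. \<not> E u v"
    proof (intro ballI)
      fix u v assume u: "u \<in> V - set P - {x}" and v: "v \<in> set Q"
      have "u \<in> W" using u unfolding W_def .
      then obtain C where "C \<in> components E W" "u \<in> C" using comp_cover[OF sym] by blast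
      then show "\<not> E u v" using Q(3) Cs(1) v by blast
    qed
    then show ?thesis using Q by blast
  qed
qed

end
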